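(* Assume $\sqrt{\sigma_1(M\Sigma^{1/2})}<\frac1{16}$ and set $\varepsilon_1=\frac{1}{2\sqrt{\|\Sigma\|_{\mathrm{op}}}}\left(\frac1{16}-\sqrt{\sigma_1(M\Sigma^{1/2})}\right)$. Let $\theta=(A,B)$ be $\varepsilon_1$-close (in $P$-norm) to $\mathcal{S}$. Then, for $x_1\sim\mathcal{N}(0,\Sigma)$, $$\mathbb{E}\left[\exp(8x_1^{\top}Bx_1)\right]<\infty,\qquad \mathbb{E}\left[\exp(16x_1^{\top}B\Sigma B^{\top}x_1)\right]<\infty.$$
   Context: $\Sigma\in\mathbb{R}^{d\times d}$ positive definite, $M\in\mathbb{R}^{p\times d}$ with $p\ge d$ and $M\Sigma^{1/2}$ of full column rank; $A\in\mathbb{R}^{p\times d}$, $B\in\mathbb{R}^{d\times d}$. With $U\Gamma V^{\top}$ an SVD of $M\Sigma^{1/2}$ ($U^{\top}U=V^{\top}V=I_d$, $\Gamma$ diagonal positive definite), $\mathcal{S}=\{(U\Gamma^{1/2}J^{\top}\Sigma^{-1/2};\ \Sigma^{-1/2}V\Gamma^{1/2}J^{\top}\Sigma^{-1/2}):J\in\mathbb{O}_d\}$. $P=\mathrm{diag}(I_p,\Sigma)$, $\|\theta\|_P=\sqrt{\mathrm{Tr}(\theta^{\top}P\theta)}$. *)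

theory Defs
  imports "HOL-Analysis.Analysis" "HOL-Probability.Probability"
begin

definition sym_mat :: "real^'n^'n \<Rightarrow> bool" where
  "sym_mat S \<longleftrightarrow> transpose S = S"

definition pos_def_mat :: "real^'n^'n \<Rightarrow> bool" where
  "pos_def_mat S \<longleftrightarrow> sym_mat S \<and> (\<forall>x. x \<noteq> 0 \<longrightarrow> x \<bullet> (S *v x) > 0)"

definition pos_semidef_mat :: "real^'n^'n \<Rightarrow> bool" where
  "pos_semidef_mat S \<longleftrightarrow> sym_mat S \<and> (\<forall>x. x \<bullet> (S *v x) \<ge> 0)"

definition mat_sqrt :: "real^'n^'n \<Rightarrow> real^'n^'n" where
  "mat_sqrt S = (THE R. pos_semidef_mat R \<and> R ** R = S)"

definition singular_values :: "real^'n^'m \<Rightarrow> real set" where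
  "singular_values A = {s. s \<ge> 0 \<and> (\<exists>v. v \<noteq> 0 \<and> (transpose A ** A) *v v = (s^2) *\<^sub>R v)}"

definition sigma1 :: "real^'n^'m \<Rightarrow> real" where
  "sigma1 A = Max (singular_values A)"

definition op_norm :: "real^'n^'m \<Rightarrow> real" where
  "op_norm A = onorm (\<lambda>x. A *v x)"

text \<open>P-norm of theta = (A;B) with P = diag(I_p, Sigma):
  sqrt (Tr (theta^T P theta)) = sqrt (Tr (A^T A) + Tr (B^T Sigma B)).\<close>
definition P_norm :: "real^'d^'d \<Rightarrow> real^'d^'p \<Rightarrow> real^'d^'d \<Rightarrow> real" where
  "P_norm Sig A B = sqrt (trace (transpose A ** A) + trace (transpose B ** Sig ** B))"

text \<open>The solution set S, for a fixed SVD  M Sigma^(1/2) = U Gamma V^T.\<close>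
definition sol_set :: "real^'d^'d \<Rightarrow> real^'d^'p \<Rightarrow> real^'d^'d \<Rightarrow> real^'d^'d
     \<Rightarrow> ((real^'d^'p) \<times> (real^'d^'d)) set" where
  "sol_set Sig U Gam V =
     {(U ** mat_sqrt Gam ** transpose J ** matrix_inv (mat_sqrt Sig),
       matrix_inv (mat_sqrt Sig) ** V ** mat_sqrt Gam ** transpose J ** matrix_inv (mat_sqrt Sig))
      | J. orthogonal_matrix J}"

definition P_dist :: "real^'d^'d \<Rightarrow> real^'d^'p \<Rightarrow> real^'d^'d
     \<Rightarrow> ((real^'d^'p) \<times> (real^'d^'d)) set \<Rightarrow> real" where
  "P_dist Sig A B S = (INF s\<in>S. P_norm Sig (A - fst s) (B - snd s))"

definition mvn_density :: "real^'d^'d \<Rightarrow> real^'d \<Rightarrow> real" where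
  "mvn_density Sig x =
     exp (- (x \<bullet> (matrix_inv Sig *v x)) / 2) / sqrt ((2 * pi) ^ CARD('d) * det Sig)"

end

theory Submission
  imports Defs
begin

lemma adj: "((A::real^'n^'m) *v x) \<bullet> y = x \<bullet> (transpose A *v y)"
  by (metis dot_lmul_matrix inner_commute transpose_matrix_vector)

lemma sym_adj: "sym_mat S \<Longrightarrow> (S *v x) \<bullet> y = x \<bullet> (S *v y)"
  by (metis adj sym_mat_def)

lemma lin_zero_aux:
  fixes a b :: real
  assumes "\<And>t. 2*t*a \<le> t^2*b"
  shows "a = 0"
proof (rule ccontr)
  assume a: "a \<noteq> 0"
  define k where "k = \<bar>b\<bar> + 1"
  have k: "k > 0" unfolding k_def by simp
  have "2*(a/k)*a \<le> (a/k)^2*b" using assms .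
  hence "2*a^2*k \<le> a^2*b" using k by (simp add: field_simps power2_eq_square)
  hence "a^2 * (2*k - b) \<le> 0" by (simp add: algebra_simps)
  moreover have "2*k - b > 0" unfolding k_def by (smt (verit) abs_ge_self)
  moreover have "a^2 > 0" using a by simp
  ultimately show False by (simp add: mult_le_0_iff)
qed

lemma spec_sub:
  fixes S :: "real^'n^'n"
  assumes symS: "sym_mat S"
  shows "subspace W \<Longrightarrow> (\<forall>w\<in>W. S *v w \<in> W) \<Longrightarrow>
    \<exists>B. B \<subseteq> W \<and> finite B \<and> pairwise orthogonal B \<and>
        (\<forall>b\<in>B. norm b = 1 \<and> S *v b = (b \<bullet> (S *v b)) *\<^sub>R b) \<and> W \<subseteq> span B"
proof (induction "dim W" arbitrary: W rule: less_induct)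
  case less
  show ?case
  proof (cases "W \<subseteq> {0}")
    case True
    thus ?thesis by (intro exI[of _ "{}"]) auto
  next
    case False
    then obtain w where w: "w \<in> W" "w \<noteq> 0" by auto
    define K where "K = W \<inter> sphere 0 1"
    have cK: "compact K" unfolding K_def
      using compact_Int_closed[OF compact_sphere closed_subspace[OF less.prems(1)], of 0 1]
      by (simp add: Int_commute)
    have "w /\<^sub>R norm w \<in> K" using w less.prems(1) unfolding K_def
      by (simp add: subspace_scale)
    hence neK: "K \<noteq> {}" by auto
    have ctK: "continuous_on K (\<lambda>x. x \<bullet> (S *v x))"
      by (intro continuous_intros)
    obtain v where v: "v \<in> K" and vmax: "\<And>y. y \<in> K \<Longrightarrow> y \<bullet> (S *v y) \<le> v \<bullet> (S *v v)"
      using continuous_attains_sup[OF cK neK ctK] by blast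
    define l where "l = v \<bullet> (S *v v)"
    have vW: "v \<in> W" and nv: "norm v = 1" using v unfolding K_def by auto
    have vv: "v \<bullet> v = 1" using nv by (simp add: norm_eq_1)
    have bound: "x \<bullet> (S *v x) \<le> l * (x \<bullet> x)" if "x \<in> W" for x
    proof (cases "x = 0")
      case True thus ?thesis by simp
    next
      case False
      have "x /\<^sub>R norm x \<in> K" using that False less.prems(1) unfolding K_def
        by (simp add: subspace_scale)
      hence "(x /\<^sub>R norm x) \<bullet> (S *v (x /\<^sub>R norm x)) \<le> l" using vmax l_def by blast
      hence "(x \<bullet> (S *v x)) / (norm x)^2 \<le> l"
        by (simp add: matrix_vector_mult_scaleR power2_eq_square divide_simps)
      thus ?thesis using False by (simp add: divide_simps power2_norm_eq_inner)
    qed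
    have orth: "w \<bullet> (S *v v) = 0" if wW: "w \<in> W" and wv: "w \<bullet> v = 0" for w
    proof -
      have "2*t*(w \<bullet> (S *v v)) \<le> t^2 * (l * (w \<bullet> w) - w \<bullet> (S *v w))" for t
      proof -
        have "v + t *\<^sub>R w \<in> W" using vW wW less.prems(1) by (simp add: subspace_add subspace_scale)
        from bound[OF this]
        have "(v + t *\<^sub>R w) \<bullet> (S *v (v + t *\<^sub>R w)) \<le> l * ((v + t *\<^sub>R w) \<bullet> (v + t *\<^sub>R w))" .
        moreover have "v \<bullet> (S *v w) = w \<bullet> (S *v v)"
          using sym_adj[OF symS, of w v] by (simp add: inner_commute)
        ultimately show ?thesis using wv vv
          by (simp add: matrix_vector_right_distrib matrix_vector_mult_scaleR inner_add_left
              inner_add_right inner_commute l_def power2_eq_square algebra_simps)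
      qed
      thus ?thesis by (rule lin_zero_aux)
    qed
    have SvW: "S *v v \<in> W" using less.prems(2) vW by blast
    define u where "u = S *v v - l *\<^sub>R v"
    have uW: "u \<in> W" unfolding u_def using SvW vW less.prems(1)
      by (simp add: subspace_diff subspace_scale)
    have Svv: "(S *v v) \<bullet> v = l" unfolding l_def by (rule inner_commute)
    have uv: "u \<bullet> v = 0" unfolding u_def using vv Svv by (simp add: inner_diff_left)
    have "u \<bullet> u = u \<bullet> (S *v v) - l * (u \<bullet> v)" unfolding u_def
      by (simp add: inner_diff_right)
    also have "\<dots> = 0" using orth[OF uW uv] uv by simp
    finally have "u = 0" by simp
    hence eig: "S *v v = l *\<^sub>R v" unfolding u_def by simp
    define W' where "W' = {x \<in> W. x \<bullet> v = 0}"
    have sW': "subspace W'" using less.prems(1) unfolding W'_def subspace_def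
      by (auto simp: inner_add_left)
    have inv': "\<forall>x\<in>W'. S *v x \<in> W'"
    proof
      fix x assume "x \<in> W'"
      hence "x \<in> W" "x \<bullet> v = 0" unfolding W'_def by auto
      moreover have "(S *v x) \<bullet> v = x \<bullet> (S *v v)" by (rule sym_adj[OF symS])
      ultimately show "S *v x \<in> W'" using less.prems(2) eig unfolding W'_def by auto
    qed
    have "v \<notin> W'" using vv unfolding W'_def by auto
    hence "W' \<subset> W" using vW unfolding W'_def by blast
    hence "span W' \<subset> span W"
      by (simp add: span_eq_iff[THEN iffD2, OF sW'] span_eq_iff[THEN iffD2, OF less.prems(1)])
    hence "dim W' < dim W" by (rule dim_psubset)
    from less.hyps[OF this sW' inv'] obtain B' where
      B': "B' \<subseteq> W'" "finite B'" "pairwise orthogonal B'"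
          "\<forall>b\<in>B'. norm b = 1 \<and> S *v b = (b \<bullet> (S *v b)) *\<^sub>R b" "W' \<subseteq> span B'" by blast
    show ?thesis
    proof (intro exI[of _ "insert v B'"] conjI)
      show "insert v B' \<subseteq> W" using B'(1) vW unfolding W'_def by auto
      show "finite (insert v B')" using B'(2) by simp
      show "pairwise orthogonal (insert v B')"
        using B'(1,3) unfolding pairwise_insert W'_def
        by (auto simp: orthogonal_def inner_commute)
      show "\<forall>b\<in>insert v B'. norm b = 1 \<and> S *v b = (b \<bullet> (S *v b)) *\<^sub>R b"
        using B'(4) nv eig l_def by auto
      show "W \<subseteq> span (insert v B')"
      proof
        fix x assume xW: "x \<in> W"
        have "x - (x \<bullet> v) *\<^sub>R v \<in> W'" unfolding W'_def using xW vW vv less.prems(1)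
          by (simp add: subspace_diff subspace_scale inner_diff_left)
        hence "x - (x \<bullet> v) *\<^sub>R v \<in> span B'" using B'(5) by blast
        hence "x - (x \<bullet> v) *\<^sub>R v \<in> span (insert v B')" by (meson span_mono subset_insertI subsetD)
        moreover have "(x \<bullet> v) *\<^sub>R v \<in> span (insert v B')" by (simp add: span_base span_scale)
        ultimately have "x - (x \<bullet> v) *\<^sub>R v + (x \<bullet> v) *\<^sub>R v \<in> span (insert v B')"
          by (rule span_add)
        thus "x \<in> span (insert v B')" by simp
      qed
    qed
  qed
qed

lemma ortho_coef:
  fixes B :: "(real^'n) set"
  assumes fin: "finite B" and po: "pairwise orthogonal B" and nb: "\<forall>b\<in>B. norm b = 1"
    and b': "b' \<in> B"
  shows "b' \<bullet> (\<Sum>b\<in>B. f b *\<^sub>R b) = f b'"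
proof -
  have "b' \<bullet> (\<Sum>b\<in>B. f b *\<^sub>R b) = (\<Sum>b\<in>B. f b * (b' \<bullet> b))"
    by (simp add: inner_sum_right)
  also have "\<dots> = (\<Sum>b\<in>B. if b = b' then f b else 0)"
  proof (rule sum.cong)
    fix b assume "b \<in> B"
    show "f b * (b' \<bullet> b) = (if b = b' then f b else 0)"
    proof (cases "b = b'")
      case True thus ?thesis using nb b' by (simp add: norm_eq_1)
    next
      case False thus ?thesis using po b' \<open>b \<in> B\<close>
        by (auto simp: pairwise_def orthogonal_def)
    qed
  qed simp
  also have "\<dots> = f b'" using fin b' by (simp add: sum.delta')
  finally show ?thesis .
qed

lemma expansion:
  fixes B :: "(real^'n) set"
  assumes fin: "finite B" and po: "pairwise orthogonal B" and nb: "\<forall>b\<in>B. norm b = 1"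
    and sp: "UNIV \<subseteq> span B"
  shows "x = (\<Sum>b\<in>B. (b \<bullet> x) *\<^sub>R b)"
proof -
  define y where "y = x - (\<Sum>b\<in>B. (b \<bullet> x) *\<^sub>R b)"
  have "orthogonal y b" if "b \<in> B" for b
  proof -
    have "b \<bullet> y = 0"
      using ortho_coef[OF fin po nb that, of "\<lambda>b. b \<bullet> x"] unfolding y_def
      by (simp add: inner_diff_right)
    thus ?thesis by (simp add: orthogonal_def inner_commute)
  qed
  hence "orthogonal y y" using sp by (intro orthogonal_to_span[of y B y]) auto
  hence "y = 0" by (simp add: orthogonal_def)
  thus ?thesis unfolding y_def by simp
qed

lemma spectral:
  fixes S :: "real^'n^'n"
  assumes "sym_mat S"
  obtains B where "finite B" "pairwise orthogonal B"
    "\<forall>b\<in>B. norm b = 1 \<and> S *v b = (b \<bullet> (S *v b)) *\<^sub>R b"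
    "\<And>x. x = (\<Sum>b\<in>B. (b \<bullet> x) *\<^sub>R b)"
proof -
  have "\<forall>w\<in>UNIV. S *v w \<in> UNIV" by simp
  from spec_sub[OF assms subspace_UNIV this]
  obtain B where B: "finite B" "pairwise orthogonal B"
    "\<forall>b\<in>B. norm b = 1 \<and> S *v b = (b \<bullet> (S *v b)) *\<^sub>R b" "UNIV \<subseteq> span B"
    by (elim exE conjE) (rule that)
  have nb: "\<forall>b\<in>B. norm b = 1" using B(3) by blast
  show ?thesis
    by (rule that[OF B(1,2,3) expansion[OF B(1,2) nb B(4)]])
qed

lemma mat_eq_adj:
  fixes A C :: "real^'n^'m"
  assumes "\<And>x y. (A *v x) \<bullet> y = (C *v x) \<bullet> y"
  shows "A = C"
proof -
  have "A *v x = C *v x" for x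
  proof -
    have "(A *v x - C *v x) \<bullet> (A *v x - C *v x) = 0"
      using assms[of x "A *v x - C *v x"] by (simp add: inner_diff_left)
    thus ?thesis by simp
  qed
  thus ?thesis by (simp add: matrix_eq)
qed

lemma mat_eq_vec:
  fixes A C :: "real^'n^'m"
  shows "(\<And>x. A *v x = C *v x) \<Longrightarrow> A = C"
  by (simp add: matrix_eq)

lemma psd_sqrt_exists:
  fixes S :: "real^'n^'n"
  assumes "pos_semidef_mat S"
  shows "\<exists>R. pos_semidef_mat R \<and> R ** R = S"
proof -
  have symS: "sym_mat S" and psd: "\<And>x. x \<bullet> (S *v x) \<ge> 0"
    using assms unfolding pos_semidef_mat_def by auto
  obtain B where B: "finite B" "pairwise orthogonal B"
    "\<forall>b\<in>B. norm b = 1 \<and> S *v b = (b \<bullet> (S *v b)) *\<^sub>R b"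
    "\<And>x. x = (\<Sum>b\<in>B. (b \<bullet> x) *\<^sub>R b)"
    using spectral[OF symS] by blast
  have nb: "\<forall>b\<in>B. norm b = 1" using B(3) by auto
  define c where "c b = sqrt (b \<bullet> (S *v b))" for b
  define f where "f x = (\<Sum>b\<in>B. (c b * (b \<bullet> x)) *\<^sub>R b)" for x
  have lf: "linear f" unfolding f_def
  proof (rule linearI)
    fix x y show "(\<Sum>b\<in>B. (c b * (b \<bullet> (x + y))) *\<^sub>R b) = (\<Sum>b\<in>B. (c b * (b \<bullet> x)) *\<^sub>R b) + (\<Sum>b\<in>B. (c b * (b \<bullet> y)) *\<^sub>R b)"
      by (simp add: inner_add_right distrib_left scaleR_add_left sum.distrib)
  next
    fix r x show "(\<Sum>b\<in>B. (c b * (b \<bullet> (r *\<^sub>R x))) *\<^sub>R b) = r *\<^sub>R (\<Sum>b\<in>B. (c b * (b \<bullet> x)) *\<^sub>R b)"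
      by (simp add: scaleR_sum_right mult.left_commute)
  qed
  define R where "R = matrix f"
  have Rx: "R *v x = f x" for x unfolding R_def using lf by simp
  have coefR: "b \<bullet> (R *v x) = c b * (b \<bullet> x)" if "b \<in> B" for b x
    unfolding Rx f_def by (rule ortho_coef[OF B(1,2) nb that])
  have RxRy: "(R *v x) \<bullet> y = (\<Sum>b\<in>B. c b * (b \<bullet> x) * (b \<bullet> y))" for x y
    unfolding Rx f_def inner_sum_left inner_scaleR_left by (rule refl)
  have symR: "sym_mat R" unfolding sym_mat_def
  proof (rule mat_eq_adj)
    fix x y
    have "(transpose R *v x) \<bullet> y = x \<bullet> (R *v y)"
      using adj[of "transpose R" x y] by simp
    also have "\<dots> = (R *v y) \<bullet> x" by (simp add: inner_commute)
    also have "\<dots> = (R *v x) \<bullet> y" unfolding RxRy by (simp add: mult.commute mult.left_commute)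
    finally show "(transpose R *v x) \<bullet> y = (R *v x) \<bullet> y" .
  qed
  have cnn: "c b \<ge> 0" for b unfolding c_def using psd by simp
  have cc: "c b * (c b * y) = b \<bullet> (S *v b) * y" for b y
    unfolding c_def using psd[of b] by (simp add: mult.assoc[symmetric])
  have psdR: "pos_semidef_mat R" unfolding pos_semidef_mat_def
  proof (intro conjI allI symR)
    fix x
    have "x \<bullet> (R *v x) = (R *v x) \<bullet> x" by (simp add: inner_commute)
    also have "\<dots> = (\<Sum>b\<in>B. c b * (b \<bullet> x) * (b \<bullet> x))" by (rule RxRy)
    also have "\<dots> \<ge> 0" using cnn by (intro sum_nonneg) (simp add: mult.assoc)
    finally show "x \<bullet> (R *v x) \<ge> 0" .
  qed
  have "(R ** R) *v x = S *v x" for x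
  proof -
    have "(R ** R) *v x = R *v (R *v x)" by (simp add: matrix_vector_mul_assoc)
    also have "\<dots> = f (R *v x)" by (rule Rx)
    also have "\<dots> = (\<Sum>b\<in>B. (c b * (c b * (b \<bullet> x))) *\<^sub>R b)"
      unfolding f_def by (intro sum.cong refl) (simp add: coefR)
    also have "\<dots> = (\<Sum>b\<in>B. ((b \<bullet> x) * (b \<bullet> (S *v b))) *\<^sub>R b)"
      by (intro sum.cong) (auto simp: cc mult_ac)
    also have "\<dots> = (\<Sum>b\<in>B. (b \<bullet> x) *\<^sub>R (S *v b))"
    proof (intro sum.cong refl)
      fix b assume bB: "b \<in> B"
      have e: "S *v b = (b \<bullet> (S *v b)) *\<^sub>R b" using B(3) bB by blast
      have "((b \<bullet> x) * (b \<bullet> (S *v b))) *\<^sub>R b = (b \<bullet> x) *\<^sub>R ((b \<bullet> (S *v b)) *\<^sub>R b)"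
        by simp
      also have "\<dots> = (b \<bullet> x) *\<^sub>R (S *v b)"
        by (rule arg_cong[where f="\<lambda>v. (b \<bullet> x) *\<^sub>R v", OF e, symmetric])
      finally show "((b \<bullet> x) * (b \<bullet> (S *v b))) *\<^sub>R b = (b \<bullet> x) *\<^sub>R (S *v b)" .
    qed
    also have "\<dots> = S *v (\<Sum>b\<in>B. (b \<bullet> x) *\<^sub>R b)"
      by (simp add: linear_sum[OF matrix_vector_mul_linear] matrix_vector_mult_scaleR o_def)
    also have "\<dots> = S *v x" by (rule arg_cong[where f="\<lambda>v. S *v v", OF B(4)[of x, symmetric]])
    finally show ?thesis .
  qed
  hence "R ** R = S" by (rule mat_eq_vec)
  thus ?thesis using psdR by blast
qed


lemma lin_comb_apply:
  fixes A :: "real^'n^'n"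
  shows "A *v (\<Sum>b\<in>B. (b \<bullet> x) *\<^sub>R b) = (\<Sum>b\<in>B. (b \<bullet> x) *\<^sub>R (A *v b))"
  by (simp add: linear_sum[OF matrix_vector_mul_linear] matrix_vector_mult_scaleR o_def)

lemma psd_sqrt_unique:
  fixes R1 R2 :: "real^'n^'n"
  assumes p1: "pos_semidef_mat R1" and p2: "pos_semidef_mat R2" and eq: "R1 ** R1 = R2 ** R2"
  shows "R1 = R2"
proof -
  have sym1: "sym_mat R1" and sym2: "sym_mat R2" and psd2: "\<And>x. x \<bullet> (R2 *v x) \<ge> 0"
    and psd1: "\<And>x. x \<bullet> (R1 *v x) \<ge> 0"
    using p1 p2 unfolding pos_semidef_mat_def by auto
  obtain B where B: "finite B" "pairwise orthogonal B"
    "\<forall>b\<in>B. norm b = 1 \<and> R1 *v b = (b \<bullet> (R1 *v b)) *\<^sub>R b"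
    "\<And>x. x = (\<Sum>b\<in>B. (b \<bullet> x) *\<^sub>R b)"
    using spectral[OF sym1] by blast
  have onb: "R2 *v b = R1 *v b" if bB: "b \<in> B" for b
  proof -
    define m where "m = b \<bullet> (R1 *v b)"
    have e1: "R1 *v b = m *\<^sub>R b" using B(3) bB unfolding m_def by blast
    have m0: "m \<ge> 0" unfolding m_def by (rule psd1)
    have sq: "R2 *v (R2 *v b) = (m * m) *\<^sub>R b"
    proof -
      have "R2 *v (R2 *v b) = (R2 ** R2) *v b" by (simp add: matrix_vector_mul_assoc)
      also have "\<dots> = R1 *v (R1 *v b)" by (simp add: eq[symmetric] matrix_vector_mul_assoc)
      also have "\<dots> = (m * m) *\<^sub>R b" by (simp add: e1 matrix_vector_mult_scaleR)
      finally show ?thesis .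
    qed
    define w where "w = R2 *v b - m *\<^sub>R b"
    have Rw: "R2 *v w = (- m) *\<^sub>R w"
      unfolding w_def by (simp add: matrix_vector_mult_diff_distrib matrix_vector_mult_scaleR sq
          algebra_simps)
    have "w \<bullet> (R2 *v w) \<ge> 0" by (rule psd2)
    hence "- m * (w \<bullet> w) \<ge> 0" by (simp add: Rw)
    hence "m = 0 \<or> w \<bullet> w = 0" using m0
      by (metis inner_ge_zero mult_eq_0_iff mult_minus_left neg_0_le_iff_le order_antisym_conv zero_le_mult_iff)
    thus ?thesis
    proof
      assume "w \<bullet> w = 0"
      hence "w = 0" by simp
      thus ?thesis unfolding w_def using e1 by simp
    next
      assume m: "m = 0"
      have "(R2 *v b) \<bullet> (R2 *v b) = b \<bullet> (R2 *v (R2 *v b))" by (rule sym_adj[OF sym2])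
      also have "\<dots> = 0" using sq m by simp
      finally have "R2 *v b = 0" by simp
      thus ?thesis using e1 m by simp
    qed
  qed
  have "R1 *v x = R2 *v x" for x
  proof -
    have "R1 *v x = R1 *v (\<Sum>b\<in>B. (b \<bullet> x) *\<^sub>R b)"
      by (rule arg_cong[where f="\<lambda>v. R1 *v v", OF B(4)[of x]])
    also have "\<dots> = (\<Sum>b\<in>B. (b \<bullet> x) *\<^sub>R (R1 *v b))" by (rule lin_comb_apply)
    also have "\<dots> = (\<Sum>b\<in>B. (b \<bullet> x) *\<^sub>R (R2 *v b))" using onb by (intro sum.cong) auto
    also have "\<dots> = R2 *v (\<Sum>b\<in>B. (b \<bullet> x) *\<^sub>R b)" by (rule lin_comb_apply[symmetric])
    also have "\<dots> = R2 *v x"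
      by (rule arg_cong[where f="\<lambda>v. R2 *v v", OF B(4)[of x, symmetric]])
    finally show ?thesis .
  qed
  thus ?thesis by (rule mat_eq_vec)
qed

lemma mat_sqrt_prop:
  assumes "pos_semidef_mat (S::real^'n^'n)"
  shows "pos_semidef_mat (mat_sqrt S) \<and> mat_sqrt S ** mat_sqrt S = S"
proof -
  have "\<exists>!R. pos_semidef_mat R \<and> R ** R = S"
    using psd_sqrt_exists[OF assms] psd_sqrt_unique by metis
  thus ?thesis unfolding mat_sqrt_def by (rule theI')
qed

lemma mat_sqrt_eq:
  assumes "pos_semidef_mat (R::real^'n^'n)" "R ** R = S"
  shows "mat_sqrt S = R"
  unfolding mat_sqrt_def
  by (rule the_equality) (use assms psd_sqrt_unique in auto)

lemma gauss1d:
  assumes "(e::real) > 0"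
  shows "(\<integral>\<^sup>+t. ennreal (exp (- e * t^2)) \<partial>lborel) < \<infinity>"
proof -
  define s where "s = sqrt (1/(2*e))"
  have s: "s > 0" "s^2 = 1/(2*e)" using assms by (auto simp: s_def)
  have eq: "exp (- e * t^2) = sqrt (2 * pi * (s ^ 2)) * normal_density 0 s t" for t
    using s assms by (simp add: normal_density_def field_simps)
  have "integrable lborel (\<lambda>t. sqrt (2 * pi * (s ^ 2)) * normal_density 0 s t)"
    using s by (intro integrable_mult_right integrable_normal_density)
  moreover have "(\<lambda>t. exp (- e * t^2)) = (\<lambda>t. sqrt (2 * pi * (s ^ 2)) * normal_density 0 s t)"
    using eq by blast
  ultimately have "integrable lborel (\<lambda>t. exp (- e * t^2))" by simp
  thus ?thesis by (simp add: integrable_iff_bounded)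
qed

lemma gauss_nd:
  assumes "(e::real) > 0"
  shows "(\<integral>\<^sup>+x. ennreal (exp (- e * norm x ^ 2)) \<partial>(lborel::('a::euclidean_space) measure)) < \<infinity>"
proof -
  have "(\<integral>\<^sup>+x. ennreal (exp (- e * norm x ^ 2)) \<partial>(lborel::'a measure))
     = (\<integral>\<^sup>+f. ennreal (exp (- e * norm (\<Sum>b\<in>Basis. f b *\<^sub>R b :: 'a) ^ 2)) \<partial>(\<Pi>\<^sub>M b\<in>Basis. lborel))"
    by (subst lborel_eq) (simp add: nn_integral_distr)
  also have "\<dots> = (\<integral>\<^sup>+f. (\<Prod>b\<in>(Basis::'a set). ennreal (exp (- e * (f b)^2))) \<partial>(\<Pi>\<^sub>M b\<in>Basis. lborel))"
  proof (rule nn_integral_cong)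
    fix f :: "'a \<Rightarrow> real"
    have "norm (\<Sum>b\<in>Basis. f b *\<^sub>R b :: 'a) ^ 2 = (\<Sum>b\<in>Basis. (f b)^2)"
    proof -
      define x where "x = (\<Sum>b\<in>Basis. f b *\<^sub>R b :: 'a)"
      have h: "x \<bullet> b = f b" if "b \<in> Basis" for b
        using that unfolding x_def by (rule inner_sum_left_Basis)
      have "norm x ^ 2 = (\<Sum>b\<in>Basis. (x \<bullet> b) * (x \<bullet> b))"
        by (metis power2_norm_eq_inner euclidean_inner)
      also have "\<dots> = (\<Sum>b\<in>Basis. (f b)^2)"
        by (rule sum.cong) (auto simp: h power2_eq_square)
      finally show ?thesis unfolding x_def .
    qed
    thus "ennreal (exp (- e * norm (\<Sum>b\<in>Basis. f b *\<^sub>R b :: 'a) ^ 2)) = (\<Prod>b\<in>Basis. ennreal (exp (- e * (f b)^2)))"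
      by (simp add: prod_ennreal exp_sum[symmetric] sum_distrib_left sum_negf)
  qed
  also have "\<dots> = (\<Prod>b\<in>(Basis::'a set). \<integral>\<^sup>+t. ennreal (exp (- e * t^2)) \<partial>lborel)"
    by (rule product_sigma_finite.product_nn_integral_prod[where f="\<lambda>_ t. ennreal (exp (- e * t^2))"])
       (auto simp: product_sigma_finite_def lborel.sigma_finite_measure_axioms)
  also have "\<dots> < \<infinity>"
    using gauss1d[OF assms] by (simp add: less_top[symmetric] power_eq_top_ennreal)
  finally show ?thesis .
qed

lemma matrix_inv_props:
  fixes A :: "real^'n^'n"
  assumes "\<And>x. A *v x = 0 \<Longrightarrow> x = 0"
  shows "A ** matrix_inv A = mat 1" "matrix_inv A ** A = mat 1"
proof -
  have "inj ((*v) A)"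
  proof (rule injI)
    fix x y assume "A *v x = A *v y"
    hence "A *v (x - y) = 0" by (simp add: matrix_vector_mult_diff_distrib)
    hence "x - y = 0" by (rule assms)
    thus "x = y" by simp
  qed
  hence "\<exists>B. B ** A = mat 1" by (simp add: matrix_left_invertible_injective)
  hence "invertible A" by (simp add: invertible_left_inverse)
  hence "\<exists>A'. A ** A' = mat 1 \<and> A' ** A = mat 1" by (simp add: invertible_def)
  hence "A ** matrix_inv A = mat 1 \<and> matrix_inv A ** A = mat 1"
    unfolding matrix_inv_def by (rule someI_ex)
  thus "A ** matrix_inv A = mat 1" "matrix_inv A ** A = mat 1" by auto
qed

lemma orth_norm:
  fixes Q :: "real^'n^'n"
  assumes "orthogonal_matrix Q"
  shows "norm (Q *v x) = norm x"
proof -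
  have "(Q *v x) \<bullet> (Q *v x) = x \<bullet> ((transpose Q ** Q) *v x)"
    by (simp add: adj matrix_vector_mul_assoc)
  also have "\<dots> = x \<bullet> x" using assms by (simp add: orthogonal_matrix_def)
  finally show ?thesis by (simp add: norm_eq_sqrt_inner)
qed

definition frob2 :: "real^'n^'m \<Rightarrow> real" where
  "frob2 M = (\<Sum>k\<in>UNIV. M $ k \<bullet> M $ k)"

lemma frob2_nonneg: "frob2 M \<ge> 0"
  unfolding frob2_def by (intro sum_nonneg) simp

lemma trace_frob2: "trace (transpose M ** M) = frob2 (M::real^'n^'m)"
proof -
  have "trace (transpose M ** M) = (\<Sum>i\<in>UNIV. \<Sum>k\<in>UNIV. M$k$i * M$k$i)"
    by (simp add: trace_def matrix_matrix_mult_def transpose_def)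
  also have "\<dots> = (\<Sum>k\<in>UNIV. \<Sum>i\<in>UNIV. M$k$i * M$k$i)" by (rule sum.swap)
  also have "\<dots> = frob2 M" by (simp add: frob2_def inner_vec_def)
  finally show ?thesis .
qed

lemma frob2_transpose: "frob2 (transpose M) = frob2 (M::real^'n^'m)"
proof -
  have "frob2 (transpose M) = (\<Sum>i\<in>UNIV. \<Sum>k\<in>UNIV. M$k$i * M$k$i)"
    by (simp add: frob2_def inner_vec_def transpose_def)
  also have "\<dots> = (\<Sum>k\<in>UNIV. \<Sum>i\<in>UNIV. M$k$i * M$k$i)" by (rule sum.swap)
  also have "\<dots> = frob2 M" by (simp add: frob2_def inner_vec_def)
  finally show ?thesis .
qed

lemma frob_bound:
  fixes M :: "real^'n^'m"
  shows "norm (M *v w) \<le> sqrt (frob2 M) * norm w"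
proof -
  have comp: "(M *v w) $ k = M $ k \<bullet> w" for k
    by (simp add: matrix_vector_mult_def inner_vec_def)
  have e1: "norm (M *v w) ^ 2 = (\<Sum>k\<in>UNIV. (M $ k \<bullet> w)^2)"
    unfolding power2_norm_eq_inner inner_vec_def[of "M *v w"] comp by (simp add: power2_eq_square)
  have e2: "(\<Sum>k\<in>UNIV. (M $ k \<bullet> w)^2) \<le> frob2 M * (w \<bullet> w)"
    unfolding frob2_def sum_distrib_right by (rule sum_mono) (rule Cauchy_Schwarz_ineq)
  have e3: "(sqrt (frob2 M) * norm w)^2 = frob2 M * (w \<bullet> w)"
    using frob2_nonneg[of M] by (simp add: power_mult_distrib power2_norm_eq_inner)
  have "norm (M *v w) ^ 2 \<le> (sqrt (frob2 M) * norm w)^2"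
    unfolding e1 e3 by (rule e2)
  thus ?thesis
    by (rule power2_le_imp_le) (simp add: frob2_nonneg)
qed

lemma integ_fin:
  fixes Sig :: "real^'d^'d" and X :: "'w \<Rightarrow> real^'d"
  assumes X: "distributed \<Omega> lborel X (\<lambda>x. ennreal (mvn_density Sig x))"
    and gm: "g \<in> borel_measurable borel"
    and eta: "\<eta> > 0"
    and bnd: "\<And>x. g x - (x \<bullet> (matrix_inv Sig *v x)) / 2 \<le> - \<eta> * norm x ^ 2"
  shows "(\<integral>\<^sup>+\<omega>. ennreal (exp (g (X \<omega>))) \<partial>\<Omega>) < \<infinity>"
proof -
  define k where "k = \<bar>1 / sqrt ((2 * pi) ^ CARD('d) * det Sig)\<bar>"
  have gm': "(\<lambda>x. ennreal (exp (g x))) \<in> borel_measurable lborel" using gm by measurable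
  have "(\<integral>\<^sup>+\<omega>. ennreal (exp (g (X \<omega>))) \<partial>\<Omega>)
        = (\<integral>\<^sup>+x. ennreal (mvn_density Sig x) * ennreal (exp (g x)) \<partial>lborel)"
    using distributed_nn_integral[OF X gm'] by simp
  also have "\<dots> \<le> (\<integral>\<^sup>+x. ennreal k * ennreal (exp (- \<eta> * norm (x::real^'d) ^ 2)) \<partial>lborel)"
  proof (rule nn_integral_mono)
    fix x
    define Q where "Q = x \<bullet> (matrix_inv Sig *v x)"
    have "mvn_density Sig x * exp (g x) \<le> k * exp (- \<eta> * norm x ^ 2)"
    proof -
      have "mvn_density Sig x * exp (g x) = (1 / sqrt ((2 * pi) ^ CARD('d) * det Sig)) * exp (g x - Q/2)"
      proof -
        have e: "exp (g x - Q/2) = exp (- Q / 2) * exp (g x)"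
          by (simp add: exp_add[symmetric])
        have aux: "\<And>a b c::real. a / c * b = 1 / c * (a * b)" by simp
        show ?thesis unfolding e unfolding mvn_density_def Q_def by (rule aux)
      qed
      also have "\<dots> \<le> k * exp (g x - Q/2)" unfolding k_def by (intro mult_right_mono abs_ge_self) auto
      also have "\<dots> \<le> k * exp (- \<eta> * norm x ^ 2)" unfolding k_def
        using bnd[of x] unfolding Q_def by (intro mult_left_mono) auto
      finally show ?thesis .
    qed
    hence "ennreal (mvn_density Sig x * exp (g x)) \<le> ennreal (k * exp (- \<eta> * norm x ^ 2))"
      by (rule ennreal_leI)
    moreover have "ennreal (mvn_density Sig x * exp (g x)) = ennreal (mvn_density Sig x) * ennreal (exp (g x))"
      by (rule ennreal_mult'') simp
    moreover have "ennreal (k * exp (- \<eta> * norm x ^ 2)) = ennreal k * ennreal (exp (- \<eta> * norm x ^ 2))"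
      by (rule ennreal_mult'') simp
    ultimately show "ennreal (mvn_density Sig x) * ennreal (exp (g x)) \<le> ennreal k * ennreal (exp (- \<eta> * norm x ^ 2))"
      by simp
  qed
  also have "\<dots> = ennreal k * (\<integral>\<^sup>+x. ennreal (exp (- \<eta> * norm (x::real^'d) ^ 2)) \<partial>lborel)"
    by (rule nn_integral_cmult) measurable
  also have "\<dots> < \<infinity>" using gauss_nd[OF eta, where 'a="real^'d"]
    by (simp add: ennreal_mult_less_top)
  finally show ?thesis .
qed

declare transpose_matrix_vector[simp del]

lemma transpose_add_mat: "transpose ((A::real^'n^'m) + C) = transpose A + transpose C"
  by (simp add: transpose_def vec_eq_iff)

lemma transpose_diff_mat: "transpose ((A::real^'n^'m) - C) = transpose A - transpose C"
  by (simp add: transpose_def vec_eq_iff)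

lemma adj': "x \<bullet> ((A::real^'n^'m) *v y) = (transpose A *v x) \<bullet> y"
  using adj[of "transpose A" x y] by simp

theorem lemma7:
  fixes Sig :: "real^'d^'d" and M :: "real^'d^'p"
    and U :: "real^'d^'p" and Gam :: "real^'d^'d" and V :: "real^'d^'d"
    and A :: "real^'d^'p" and B :: "real^'d^'d"
    and \<Omega> :: "'w measure" and X :: "'w \<Rightarrow> real^'d"
  assumes Sig_pd: "pos_def_mat Sig"
    and pd: "CARD('d) \<le> CARD('p)"
    and full_rank: "rank (M ** mat_sqrt Sig) = CARD('d)"
    and U_orth: "transpose U ** U = mat 1"
    and V_orth: "transpose V ** V = mat 1"
    and Gam_diag: "\<forall>i j. i \<noteq> j \<longrightarrow> Gam $ i $ j = 0"
    and Gam_pos: "\<forall>i. Gam $ i $ i > 0"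
    and svd: "M ** mat_sqrt Sig = U ** Gam ** transpose V"
    and small: "sqrt (sigma1 (M ** mat_sqrt Sig)) < 1/16"
    and close: "P_dist Sig A B (sol_set Sig U Gam V)
                \<le> (1 / (2 * sqrt (op_norm Sig))) * (1/16 - sqrt (sigma1 (M ** mat_sqrt Sig)))"
    and prob: "prob_space \<Omega>"
    and X_gauss: "distributed \<Omega> lborel X (\<lambda>x. ennreal (mvn_density Sig x))"
  shows "(\<integral>\<^sup>+ \<omega>. ennreal (exp (8 * (X \<omega> \<bullet> (B *v X \<omega>)))) \<partial>\<Omega>) < \<infinity>
       \<and> (\<integral>\<^sup>+ \<omega>. ennreal (exp (16 * (X \<omega> \<bullet> ((B ** Sig ** transpose B) *v X \<omega>)))) \<partial>\<Omega>) < \<infinity>"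
proof -
  define R where "R = mat_sqrt Sig"
  have Sig_psd: "pos_semidef_mat Sig"
    unfolding pos_semidef_mat_def
  proof (intro conjI allI)
    show "sym_mat Sig" using Sig_pd unfolding pos_def_mat_def by auto
    fix x :: "real^'d"
    show "0 \<le> x \<bullet> (Sig *v x)"
      using Sig_pd unfolding pos_def_mat_def by (cases "x = 0") (auto intro: less_imp_le)
  qed
  have Rp: "pos_semidef_mat R" and RR: "R ** R = Sig"
    using mat_sqrt_prop[OF Sig_psd] unfolding R_def by auto
  have symR: "transpose R = R" using Rp unfolding pos_semidef_mat_def sym_mat_def by auto
  have Sig_inj: "x = 0" if "Sig *v x = 0" for x
    using Sig_pd that unfolding pos_def_mat_def by force
  have R_inj: "x = 0" if "R *v x = 0" for x
  proof -
    have "Sig *v x = R *v (R *v x)" by (simp add: RR[symmetric] matrix_vector_mul_assoc)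
    also have "\<dots> = 0" using that by simp
    finally show ?thesis by (rule Sig_inj)
  qed
  define K where "K = matrix_inv R"
  have RK: "R ** K = mat 1" and KR: "K ** R = mat 1"
    using matrix_inv_props[OF R_inj] unfolding K_def by auto
  have Rz: "R *v (K *v x) = x" for x using RK by (simp add: matrix_vector_mul_assoc)
  have Kz: "K *v (R *v x) = x" for x using KR by (simp add: matrix_vector_mul_assoc)
  have symK: "transpose K = K"
  proof -
    have "transpose K ** R = mat 1"
      using arg_cong[OF RK, of transpose] by (simp add: matrix_transpose_mul symR)
    hence "transpose K = transpose K ** (R ** K)" by (simp add: RK)
    also have "\<dots> = K" by (simp add: matrix_mul_assoc \<open>transpose K ** R = mat 1\<close>)
    finally show ?thesis .
  qed
  define Si where "Si = matrix_inv Sig"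
  have SigSi: "Sig ** Si = mat 1" using matrix_inv_props(1)[OF Sig_inj] unfolding Si_def by auto
  have Si_eq: "Si = K ** K"
  proof -
    have KKS: "K ** K ** Sig = mat 1"
    proof -
      have "K ** K ** Sig = K ** ((K ** R) ** R)" by (simp add: RR[symmetric] matrix_mul_assoc)
      thus ?thesis by (simp add: KR)
    qed
    have "Si = (K ** K ** Sig) ** Si" by (simp add: KKS)
    also have "\<dots> = K ** K" by (simp add: matrix_mul_assoc[symmetric] SigSi)
    finally show ?thesis .
  qed
  define nS where "nS = op_norm Sig"
  have Sig_bd: "norm (Sig *v x) \<le> nS * norm x" for x
    unfolding nS_def op_norm_def by (rule onorm[OF matrix_vector_mul_bounded_linear])
  have nS_pos: "nS > 0"
  proof -
    have "nS \<ge> 0" unfolding nS_def op_norm_def by (rule onorm_pos_le[OF matrix_vector_mul_bounded_linear])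
    moreover have "nS \<noteq> 0"
    proof
      assume "nS = 0"
      hence "Sig *v axis undefined 1 = 0" using Sig_bd[of "axis undefined 1"] by simp
      hence "axis undefined (1::real) = (0::real^'d)" by (rule Sig_inj)
      thus False by simp
    qed
    ultimately show ?thesis by simp
  qed
  have R_bd: "norm (R *v z) \<le> sqrt nS * norm z" for z
  proof -
    have "(R *v z) \<bullet> (R *v z) = z \<bullet> (R *v (R *v z))" by (simp add: adj symR)
    also have "\<dots> = z \<bullet> (Sig *v z)" by (simp add: RR[symmetric] matrix_vector_mul_assoc)
    also have "\<dots> \<le> norm z * norm (Sig *v z)" by (rule norm_cauchy_schwarz)
    also have "\<dots> \<le> norm z * (nS * norm z)" by (intro mult_left_mono Sig_bd) simp
    finally have h: "norm (R *v z) ^ 2 \<le> nS * norm z ^ 2"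
      by (simp add: power2_norm_eq_inner[symmetric] power2_eq_square mult_ac)
    have "(sqrt nS * norm z) ^ 2 = nS * norm z ^ 2" using nS_pos by (simp add: power_mult_distrib)
    hence "norm (R *v z) ^ 2 \<le> (sqrt nS * norm z) ^ 2" using h by simp
    thus ?thesis by (rule power2_le_imp_le) (use nS_pos in simp)
  qed
  have x_bd: "norm x ^ 2 \<le> nS * ((K *v x) \<bullet> (K *v x))" for x
  proof -
    have "norm x = norm (R *v (K *v x))" by (simp add: Rz)
    also have "\<dots> \<le> sqrt nS * norm (K *v x)" by (rule R_bd)
    finally have "norm x ^ 2 \<le> (sqrt nS * norm (K *v x)) ^ 2" by (rule power_mono) simp
    thus ?thesis using nS_pos by (simp add: power_mult_distrib power2_norm_eq_inner)
  qed
  have Q_eq: "x \<bullet> (Si *v x) = (K *v x) \<bullet> (K *v x)" for x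
  proof -
    have "x \<bullet> (Si *v x) = x \<bullet> (K *v (K *v x))" by (simp add: Si_eq matrix_vector_mul_assoc)
    also have "\<dots> = (R *v (K *v x)) \<bullet> (K *v (K *v x))" by (simp only: Rz)
    also have "\<dots> = (K *v x) \<bullet> (transpose R *v (K *v (K *v x)))" by (rule adj)
    also have "\<dots> = (K *v x) \<bullet> (K *v x)" by (simp only: symR Rz)
    finally show ?thesis .
  qed
  have Gam_mv: "Gam *v w = (\<chi> i. Gam$i$i * w$i)" for w
  proof -
    have "(\<Sum>j\<in>UNIV. Gam$i$j * w$j) = Gam$i$i * w$i" for i
    proof -
      have "(\<Sum>j\<in>UNIV. Gam$i$j * w$j) = (\<Sum>j\<in>UNIV. if j = i then Gam$i$i * w$i else 0)"
        by (rule sum.cong) (auto simp: Gam_diag)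
      thus ?thesis by simp
    qed
    thus ?thesis by (simp add: matrix_vector_mult_def vec_eq_iff)
  qed
  have GamT: "transpose Gam = Gam"
    unfolding transpose_def vec_eq_iff using Gam_diag by (metis vec_lambda_beta)
  define Gd where "Gd = ((\<chi> i j. if i = j then sqrt (Gam$i$i) else 0) :: real^'d^'d)"
  have Gd_mv: "Gd *v w = (\<chi> i. sqrt (Gam$i$i) * w$i)" for w
  proof -
    have "(\<Sum>j\<in>UNIV. Gd$i$j * w$j) = sqrt (Gam$i$i) * w$i" for i
    proof -
      have "(\<Sum>j\<in>UNIV. Gd$i$j * w$j) = (\<Sum>j\<in>UNIV. if j = i then sqrt (Gam$i$i) * w$i else 0)"
        by (rule sum.cong) (auto simp: Gd_def)
      thus ?thesis by simp
    qed
    thus ?thesis by (simp add: matrix_vector_mult_def vec_eq_iff)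
  qed
  have GdT: "transpose Gd = Gd" by (auto simp: Gd_def transpose_def vec_eq_iff)
  have Gd_psd: "pos_semidef_mat Gd" unfolding pos_semidef_mat_def sym_mat_def
  proof (intro conjI allI GdT)
    fix x :: "real^'d"
    have "x \<bullet> (Gd *v x) = (\<Sum>i\<in>UNIV. sqrt (Gam$i$i) * (x$i * x$i))"
      by (simp add: Gd_mv inner_vec_def mult_ac)
    also have "\<dots> \<ge> 0" using Gam_pos by (intro sum_nonneg mult_nonneg_nonneg[OF real_sqrt_ge_zero]) (auto simp: less_imp_le)
    finally show "x \<bullet> (Gd *v x) \<ge> 0" .
  qed
  have GdGd: "Gd ** Gd = Gam"
  proof (rule mat_eq_vec)
    fix w
    have "(Gd ** Gd) *v w = Gd *v (Gd *v w)" by (simp add: matrix_vector_mul_assoc)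
    also have "\<dots> = Gam *v w"
      using Gam_pos by (simp add: Gd_mv Gam_mv vec_eq_iff mult.assoc[symmetric] less_imp_le)
    finally show "(Gd ** Gd) *v w = Gam *v w" .
  qed
  have G_eq: "mat_sqrt Gam = Gd" by (rule mat_sqrt_eq[OF Gd_psd GdGd])
  define s1 where "s1 = sigma1 (M ** R)"
  define s where "s = sqrt s1"
  have VVt: "V ** transpose V = mat 1" using V_orth by (simp add: matrix_left_right_inverse)
  have Vo: "orthogonal_matrix V" using V_orth by (simp add: orthogonal_matrix)
  have Vt_V: "transpose V *v (V *v w) = w" for w using V_orth by (simp add: matrix_vector_mul_assoc)
  have V_Vt: "V *v (transpose V *v w) = w" for w using VVt by (simp add: matrix_vector_mul_assoc)
  have Ut_U: "transpose U *v (U *v w) = w" for w using U_orth by (simp add: matrix_vector_mul_assoc)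
  have TT: "(transpose (M ** R) ** (M ** R)) *v v = V *v (Gam *v (Gam *v (transpose V *v v)))" for v
  proof -
    have "transpose (M ** R) = V ** Gam ** transpose U"
      unfolding R_def svd by (simp add: matrix_transpose_mul GamT matrix_mul_assoc)
    thus ?thesis unfolding R_def svd
      by (simp add: matrix_vector_mul_assoc[symmetric] Ut_U)
  qed
  have SV_in: "Gam$i$i \<in> singular_values (M ** R)" for i
  proof -
    define v where "v = V *v axis i 1"
    have "transpose V *v v = axis i 1" unfolding v_def by (rule Vt_V)
    hence vnz: "v \<noteq> 0" by auto
    have "Gam *v (Gam *v axis i 1) = (Gam$i$i ^ 2) *\<^sub>R axis i (1::real)"
      by (simp add: Gam_mv vec_eq_iff axis_def power2_eq_square)
    hence "(transpose (M ** R) ** (M ** R)) *v v = (Gam$i$i ^ 2) *\<^sub>R v"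
      unfolding TT \<open>transpose V *v v = axis i 1\<close> by (simp add: v_def matrix_vector_mult_scaleR)
    thus ?thesis unfolding singular_values_def using vnz Gam_pos less_imp_le by blast
  qed
  have SV_sub: "singular_values (M ** R) \<subseteq> range (\<lambda>i. Gam$i$i)"
  proof
    fix t assume "t \<in> singular_values (M ** R)"
    then obtain v where t0: "t \<ge> 0" and vnz: "v \<noteq> 0"
      and ev: "(transpose (M ** R) ** (M ** R)) *v v = (t^2) *\<^sub>R v"
      unfolding singular_values_def by blast
    define w where "w = transpose V *v v"
    have wnz: "w \<noteq> 0" using vnz V_Vt[of v] unfolding w_def by auto
    have "Gam *v (Gam *v w) = transpose V *v ((transpose (M ** R) ** (M ** R)) *v v)"
      unfolding TT w_def by (simp add: Vt_V)
    also have "\<dots> = (t^2) *\<^sub>R w" unfolding ev w_def by (simp add: matrix_vector_mult_scaleR)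
    finally have eq: "Gam *v (Gam *v w) = (t^2) *\<^sub>R w" .
    obtain i where wi: "w $ i \<noteq> 0" using wnz by (auto simp: vec_eq_iff)
    have "Gam$i$i * (Gam$i$i * w$i) = t^2 * w$i"
      using arg_cong[OF eq, of "\<lambda>u. u $ i"] by (simp add: Gam_mv)
    hence "(Gam$i$i)^2 = t^2" using wi by (simp add: power2_eq_square mult.assoc[symmetric])
    moreover have "Gam$i$i \<ge> 0" using Gam_pos less_imp_le by blast
    ultimately have "Gam$i$i = t" using t0 by (simp add: power2_eq_iff_nonneg)
    thus "t \<in> range (\<lambda>i. Gam$i$i)" by auto
  qed
  have SV_fin: "finite (singular_values (M ** R))"
    by (rule finite_subset[OF SV_sub]) simp
  have Gam_le: "Gam$i$i \<le> s1" for i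
    unfolding s1_def sigma1_def by (rule Max_ge[OF SV_fin SV_in])
  have s1_nn: "s1 \<ge> 0" using Gam_le[of undefined] Gam_pos by (meson less_imp_le order_trans)
  have Gd_bd: "norm (Gd *v w) \<le> s * norm w" for w
  proof -
    have "(Gd *v w) \<bullet> (Gd *v w) = (\<Sum>i\<in>UNIV. Gam$i$i * (w$i * w$i))"
      using Gam_pos by (simp add: Gd_mv inner_vec_def mult_ac less_imp_le)
    also have "\<dots> \<le> (\<Sum>i\<in>UNIV. s1 * (w$i * w$i))"
      by (intro sum_mono mult_right_mono Gam_le) simp
    also have "\<dots> = s1 * (w \<bullet> w)" by (simp add: inner_vec_def sum_distrib_left)
    finally have "norm (Gd *v w) ^ 2 \<le> (s * norm w) ^ 2"
      using s1_nn by (simp add: s_def power_mult_distrib power2_norm_eq_inner)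
    thus ?thesis by (rule power2_le_imp_le) (simp add: s_def s1_nn)
  qed
  have s_lt: "s < 1/16" using small unfolding s_def s1_def R_def .
  have s_nn: "s \<ge> 0" unfolding s_def using s1_nn by simp
  define e1 where "e1 = (1 / (2 * sqrt nS)) * (1/16 - s)"
  have e1_pos: "e1 > 0" unfolding e1_def using nS_pos s_lt by simp
  have close': "P_dist Sig A B (sol_set Sig U Gam V) \<le> e1"
    using close unfolding e1_def nS_def s_def s1_def R_def .
  define SS where "SS = sol_set Sig U Gam V"
  have SS_eq: "SS = {(U ** Gd ** transpose J ** K, K ** V ** Gd ** transpose J ** K) | J. orthogonal_matrix J}"
    unfolding SS_def sol_set_def G_eq R_def[symmetric] K_def[symmetric] ..
  have ne: "SS \<noteq> {}" unfolding SS_eq using orthogonal_matrix_id by blast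
  have trD: "trace (transpose D' ** Sig ** D') = frob2 (R ** D')" for D'
  proof -
    have "transpose (R ** D') ** (R ** D') = transpose D' ** Sig ** D'"
      by (simp add: matrix_transpose_mul symR RR[symmetric] matrix_mul_assoc)
    thus ?thesis using trace_frob2[of "R ** D'"] by simp
  qed
  have bdd: "bdd_below ((\<lambda>p. P_norm Sig (A - fst p) (B - snd p)) ` SS)"
    by (rule bdd_belowI2[where m=0]) (simp add: P_norm_def trD trace_frob2 frob2_nonneg)
  have "(INF p\<in>SS. P_norm Sig (A - fst p) (B - snd p)) < 2 * e1"
    using close' e1_pos unfolding P_dist_def SS_def by simp
  then obtain p where pS: "p \<in> SS" and pl: "P_norm Sig (A - fst p) (B - snd p) < 2 * e1"
    using cINF_less_iff[OF ne bdd] by blast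
  from pS obtain J where Jo: "orthogonal_matrix J"
    and p_eq: "p = (U ** Gd ** transpose J ** K, K ** V ** Gd ** transpose J ** K)"
    unfolding SS_eq by blast
  define BJ where "BJ = K ** V ** Gd ** transpose J ** K"
  define D where "D = B - BJ"
  define F where "F = sqrt (frob2 (R ** D))"
  have Fnn: "F \<ge> 0" unfolding F_def by (simp add: frob2_nonneg)
  have F_lt: "F < 2 * e1"
  proof -
    have tr: "trace (transpose D ** Sig ** D) = frob2 (R ** D)" by (rule trD)
    have "F \<le> P_norm Sig (A - fst p) (B - snd p)"
      unfolding P_norm_def F_def tr using p_eq
      by (simp add: D_def BJ_def trace_frob2 frob2_nonneg trD)
    thus ?thesis using pl by simp
  qed
  define c where "c = s + F * sqrt nS"
  have c_nn: "c \<ge> 0" unfolding c_def using s_nn Fnn nS_pos by (simp add: add_nonneg_nonneg mult_nonneg_nonneg)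
  have c_lt: "c < 1/16"
  proof -
    have "F * sqrt nS < 2 * e1 * sqrt nS" using F_lt nS_pos by simp
    also have "2 * e1 * sqrt nS = 1/16 - s" unfolding e1_def using nS_pos by simp
    finally show ?thesis unfolding c_def by simp
  qed
  have nJt: "norm (transpose J *v z) = norm z" for z using Jo by (simp add: orth_norm)
  have nJ: "norm (J *v z) = norm z" for z using Jo by (simp add: orth_norm)
  have nVt: "norm (transpose V *v z) = norm z" for z using Vo by (simp add: orth_norm)
  have RDbd: "norm ((R ** D) *v w) \<le> F * norm w" for w unfolding F_def by (rule frob_bound)
  have RDTbd: "norm (transpose (R ** D) *v w) \<le> F * norm w" for w
    using frob_bound[of "transpose (R ** D)" w] unfolding F_def by (simp add: frob2_transpose)
  have BD: "B = BJ + D" unfolding D_def by simp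
  have bound1: "z \<bullet> (R *v (B *v (R *v z))) \<le> c * (z \<bullet> z)" for z
  proof -
    have e: "R *v (BJ *v (R *v z)) = V *v (Gd *v (transpose J *v z))"
      unfolding BJ_def by (simp add: matrix_vector_mul_assoc[symmetric] Kz Rz)
    have "R *v (B *v (R *v z)) = V *v (Gd *v (transpose J *v z)) + (R ** D) *v (R *v z)"
      unfolding BD by (simp add: matrix_vector_mult_add_rdistrib matrix_vector_right_distrib e
          matrix_vector_mul_assoc[symmetric])
    hence "z \<bullet> (R *v (B *v (R *v z))) = (transpose V *v z) \<bullet> (Gd *v (transpose J *v z))
            + z \<bullet> ((R ** D) *v (R *v z))"
      by (simp add: inner_add_right adj')
    also have "\<dots> \<le> norm z * (s * norm z) + norm z * (F * (sqrt nS * norm z))"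
    proof (rule add_mono)
      have "(transpose V *v z) \<bullet> (Gd *v (transpose J *v z)) \<le> norm (transpose V *v z) * norm (Gd *v (transpose J *v z))"
        by (rule norm_cauchy_schwarz)
      also have "\<dots> \<le> norm z * (s * norm z)"
        unfolding nVt using Gd_bd[of "transpose J *v z"] by (intro mult_left_mono) (auto simp: nJt)
      finally show "(transpose V *v z) \<bullet> (Gd *v (transpose J *v z)) \<le> norm z * (s * norm z)" .
      have "z \<bullet> ((R ** D) *v (R *v z)) \<le> norm z * norm ((R ** D) *v (R *v z))"
        by (rule norm_cauchy_schwarz)
      also have "\<dots> \<le> norm z * (F * (sqrt nS * norm z))"
        using RDbd[of "R *v z"] R_bd[of z] Fnn
        by (intro mult_left_mono) (auto intro: order_trans mult_left_mono)
      finally show "z \<bullet> ((R ** D) *v (R *v z)) \<le> norm z * (F * (sqrt nS * norm z))" .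
    qed
    also have "\<dots> = c * (z \<bullet> z)" unfolding c_def
      by (simp add: power2_norm_eq_inner[symmetric] power2_eq_square algebra_simps)
    finally show ?thesis .
  qed
  have bound2: "norm (R *v (transpose B *v (R *v z))) \<le> c * norm z" for z
  proof -
    have BJT: "transpose BJ = K ** J ** Gd ** transpose V ** K"
      unfolding BJ_def by (simp add: matrix_transpose_mul symK GdT matrix_mul_assoc)
    have e: "R *v (transpose BJ *v (R *v z)) = J *v (Gd *v (transpose V *v z))"
      unfolding BJT by (simp add: matrix_vector_mul_assoc[symmetric] Kz Rz)
    have e2: "R *v (transpose D *v (R *v z)) = R *v (transpose (R ** D) *v z)"
      by (simp add: matrix_transpose_mul symR matrix_vector_mul_assoc[symmetric])
    have "R *v (transpose B *v (R *v z)) = J *v (Gd *v (transpose V *v z)) + R *v (transpose (R ** D) *v z)"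
      unfolding BD transpose_add_mat
      by (simp add: matrix_vector_mult_add_rdistrib matrix_vector_right_distrib e e2)
    hence "norm (R *v (transpose B *v (R *v z))) \<le> norm (J *v (Gd *v (transpose V *v z))) + norm (R *v (transpose (R ** D) *v z))"
      by (simp add: norm_triangle_ineq)
    also have "\<dots> \<le> s * norm z + sqrt nS * (F * norm z)"
    proof (rule add_mono)
      show "norm (J *v (Gd *v (transpose V *v z))) \<le> s * norm z"
        unfolding nJ using Gd_bd[of "transpose V *v z"] by (simp add: nVt)
      show "norm (R *v (transpose (R ** D) *v z)) \<le> sqrt nS * (F * norm z)"
        using R_bd[of "transpose (R ** D) *v z"] RDTbd[of z]
        by (meson order_trans mult_left_mono real_sqrt_ge_zero nS_pos less_imp_le)
    qed
    also have "\<dots> = c * norm z" unfolding c_def by (simp add: algebra_simps)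
    finally show ?thesis .
  qed
  have Si_def': "matrix_inv Sig = Si" unfolding Si_def ..
  have xRz: "x = R *v (K *v x)" for x by (simp add: Rz)
  have part1: "(\<integral>\<^sup>+ \<omega>. ennreal (exp (8 * (X \<omega> \<bullet> (B *v X \<omega>)))) \<partial>\<Omega>) < \<infinity>"
  proof (rule integ_fin[OF X_gauss, where g="\<lambda>x. 8 * (x \<bullet> (B *v x))"])
    show "(\<lambda>x. 8 * (x \<bullet> (B *v x))) \<in> borel_measurable borel"
      by (intro borel_measurable_continuous_onI continuous_intros)
    show "(1/2 - 8 * c) / nS > 0" using c_lt nS_pos by simp
    fix x :: "real^'d"
    define z where "z = K *v x"
    have xz: "x = R *v z" unfolding z_def by (simp add: Rz)
    have q1: "x \<bullet> (B *v x) = z \<bullet> (R *v (B *v (R *v z)))"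
      unfolding xz by (simp add: adj' symR)
    have q2: "x \<bullet> (matrix_inv Sig *v x) = z \<bullet> z" unfolding Si_def' z_def by (rule Q_eq)
    have nx: "norm x ^ 2 \<le> nS * (z \<bullet> z)" unfolding z_def by (rule x_bd)
    have "8 * (x \<bullet> (B *v x)) - x \<bullet> (matrix_inv Sig *v x) / 2 \<le> (8 * c - 1/2) * (z \<bullet> z)"
      unfolding q1 q2 using bound1[of z] by (simp add: algebra_simps)
    also have "\<dots> \<le> (8 * c - 1/2) * (norm x ^ 2 / nS)"
      by (rule mult_left_mono_neg) (use nx nS_pos c_lt in \<open>simp_all add: field_simps\<close>)
    also have "\<dots> = - ((1/2 - 8 * c) / nS) * norm x ^ 2" by (simp add: minus_divide_left)
    finally show "8 * (x \<bullet> (B *v x)) - x \<bullet> (matrix_inv Sig *v x) / 2 \<le> - ((1/2 - 8 * c) / nS) * norm x ^ 2" .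
  qed
  have part2: "(\<integral>\<^sup>+ \<omega>. ennreal (exp (16 * (X \<omega> \<bullet> ((B ** Sig ** transpose B) *v X \<omega>)))) \<partial>\<Omega>) < \<infinity>"
  proof (rule integ_fin[OF X_gauss, where g="\<lambda>x. 16 * (x \<bullet> ((B ** Sig ** transpose B) *v x))"])
    show "(\<lambda>x. 16 * (x \<bullet> ((B ** Sig ** transpose B) *v x))) \<in> borel_measurable borel"
      by (intro borel_measurable_continuous_onI continuous_intros)
    have "c * c \<le> c * (1/16)" using c_lt c_nn by (intro mult_left_mono) auto
    hence c2: "c * c < 1/256" using c_lt by linarith
    show "(1/2 - 16 * (c * c)) / nS > 0" using c2 nS_pos by simp
    fix x :: "real^'d"
    define z where "z = K *v x"
    define w where "w = R *v (transpose B *v (R *v z))"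
    have xz: "x = R *v z" unfolding z_def by (simp add: Rz)
    have q1: "x \<bullet> ((B ** Sig ** transpose B) *v x) = w \<bullet> w"
    proof -
      have "x \<bullet> ((B ** Sig ** transpose B) *v x) = x \<bullet> (B *v (R *v (R *v (transpose B *v x))))"
        by (simp add: RR[symmetric] matrix_vector_mul_assoc[symmetric])
      also have "\<dots> = (transpose B *v x) \<bullet> (R *v (R *v (transpose B *v x)))" by (simp add: adj')
      also have "\<dots> = (R *v (transpose B *v x)) \<bullet> (R *v (transpose B *v x))" by (simp add: adj' symR)
      finally show ?thesis unfolding w_def xz[symmetric] .
    qed
    have q2: "x \<bullet> (matrix_inv Sig *v x) = z \<bullet> z" unfolding Si_def' z_def by (rule Q_eq)
    have nx: "norm x ^ 2 \<le> nS * (z \<bullet> z)" unfolding z_def by (rule x_bd)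
    have ww: "w \<bullet> w \<le> (c * c) * (z \<bullet> z)"
    proof -
      have "norm w \<le> c * norm z" unfolding w_def by (rule bound2)
      hence "norm w ^ 2 \<le> (c * norm z) ^ 2" by (rule power_mono) simp
      thus ?thesis by (simp add: power2_norm_eq_inner[symmetric] power_mult_distrib power2_eq_square mult_ac)
    qed
    have "16 * (x \<bullet> ((B ** Sig ** transpose B) *v x)) - x \<bullet> (matrix_inv Sig *v x) / 2
          \<le> (16 * (c * c) - 1/2) * (z \<bullet> z)"
      unfolding q1 q2 using ww by (simp add: algebra_simps)
    also have "\<dots> \<le> (16 * (c * c) - 1/2) * (norm x ^ 2 / nS)"
      by (rule mult_left_mono_neg) (use nx nS_pos c2 in \<open>simp_all add: field_simps\<close>)
    also have "\<dots> = - ((1/2 - 16 * (c * c)) / nS) * norm x ^ 2" by (simp add: minus_divide_left)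
    finally show "16 * (x \<bullet> ((B ** Sig ** transpose B) *v x)) - x \<bullet> (matrix_inv Sig *v x) / 2
          \<le> - ((1/2 - 16 * (c * c)) / nS) * norm x ^ 2" .
  qed
  show ?thesis using part1 part2 by simp
qed

end
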